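(* Let $\mathbf t:\mathcal D\to\mathcal T$ be a refinement system, $c:A\to B$ in $\mathcal T$, and $\phi$ a presheaf on $A^{+}$. Then $(c^{-})^*(\phi^{\perp_A})\cong\big((c^{+})_!\phi\big)^{\perp_B}$ as presheaves on $B^{-}$.
   Context: A refinement system is a functor $\mathbf{t}:\mathcal{D}\to\mathcal{T}$; composition is diagrammatic. Write $P\sqsubset A$ if $\mathbf t(P)=A$; a derivation of $P\Rightarrow_cQ$ is a morphism $\alpha:P\to Q$ with $\mathbf t(\alpha)=c$. For $B\in\mathcal T$: $B^{+}$ has objects $(P,c)$, $P\sqsubset X$, $c:X\to B$, morphisms $(P_1,c_1)\to(P_2,c_2)$ the derivations of $P_1\Rightarrow_eP_2$ with $c_1=e;c_2$; $B^{-}$ is the opposite of the category with objects $(d,R)$, $d:B\to Y$, $R\sqsubset Y$, morphisms $(d_1,R_1)\to(d_2,R_2)$ the derivations of $R_1\Rightarrow_eR_2$ with $d_1;e=d_2$. For $c:A\to B$: $c^{+}:A^{+}\to B^{+}$, $(P,e)\mapsto(P,e;c)$, and $c^{-}:B^{-}\to A^{-}$, $(d,R)\mapsto(c;d,R)$, both identity on derivations. $\mathrm{Jdg}(\mathbf t)$ has objects $(P,c,R)$ ($P\sqsubset X$, $c:X\to Y$, $R\sqsubset Y$) and morphisms $(P_1,c_1,R_1)\to(P_2,c_2,R_2)$ pairs of derivations $\beta$ of $P_1\Rightarrow_eP_2$, $\gamma$ of $R_2\Rightarrow_{e'}R_1$ with $c_1=e;c_2;e'$; $\mathrm{Der}:\mathrm{Jdg}(\mathbf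 t)^{op}\to\mathbf{Set}$ sends $(P,c,R)$ to the set of derivations of $P\Rightarrow_cR$ and $(\beta,\gamma)$ to $\alpha\mapsto\beta;\alpha;\gamma$. Bracket $\langle-\mid-\rangle_B:B^{+}\times B^{-}\to\mathrm{Jdg}(\mathbf t)$: $((P,c),(d,R))\mapsto(P,c;d,R)$, and on morphisms $(\beta,\gamma)\mapsto(\beta,\gamma)$. For a presheaf $\phi$ on $B^{+}$, $\phi^{\perp_B}$ is the presheaf on $B^{-}$ with $\phi^{\perp_B}(y)=$ the set of natural transformations $\phi\Rightarrow\mathrm{Der}(\langle-\mid y\rangle_B)$. For a functor $F:\mathcal X\to\mathcal Y$ and presheaves $\psi$ on $\mathcal Y$, $\chi$ on $\mathcal X$: $F^*\psi=\psi\circ F^{op}$ and $F_!\chi(y)=\int^{x}\mathcal Y(y,Fx)\times\chi(x)$. *)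

theory Defs
  imports Main "HOL-Library.FuncSet"
begin

record ('o, 'a) cat =
  Ob  :: "'o set"
  Ar  :: "'a set"
  Src :: "'a \<Rightarrow> 'o"
  Tgt :: "'a \<Rightarrow> 'o"
  Idt :: "'o \<Rightarrow> 'a"
  Cmp :: "'a \<Rightarrow> 'a \<Rightarrow> 'a"   (* Cmp f g = f ; g *)

definition hom :: "('o, 'a) cat \<Rightarrow> 'o \<Rightarrow> 'o \<Rightarrow> 'a set" where
  "hom C x y = {f \<in> Ar C. Src C f = x \<and> Tgt C f = y}"

definition category :: "('o, 'a) cat \<Rightarrow> bool" where
  "category C \<longleftrightarrow>
     (\<forall>f\<in>Ar C. Src C f \<in> Ob C \<and> Tgt C f \<in> Ob C) \<and>
     (\<forall>x\<in>Ob C. Idt C x \<in> hom C x x) \<and>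
     (\<forall>x\<in>Ob C. \<forall>y\<in>Ob C. \<forall>z\<in>Ob C. \<forall>f\<in>hom C x y. \<forall>g\<in>hom C y z. Cmp C f g \<in> hom C x z) \<and>
     (\<forall>f\<in>Ar C. Cmp C (Idt C (Src C f)) f = f \<and> Cmp C f (Idt C (Tgt C f)) = f) \<and>
     (\<forall>f\<in>Ar C. \<forall>g\<in>Ar C. \<forall>h\<in>Ar C. Tgt C f = Src C g \<longrightarrow> Tgt C g = Src C h \<longrightarrow>
         Cmp C (Cmp C f g) h = Cmp C f (Cmp C g h))"

definition opc :: "('o, 'a) cat \<Rightarrow> ('o, 'a) cat" where
  "opc C = \<lparr>Ob = Ob C, Ar = Ar C, Src = Tgt C, Tgt = Src C, Idt = Idt C,
            Cmp = (\<lambda>f g. Cmp C g f)\<rparr>"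

record ('o1, 'a1, 'o2, 'a2) ftr =
  FO :: "'o1 \<Rightarrow> 'o2"
  FA :: "'a1 \<Rightarrow> 'a2"

definition is_functor :: "('o1, 'a1) cat \<Rightarrow> ('o2, 'a2) cat \<Rightarrow> ('o1, 'a1, 'o2, 'a2) ftr \<Rightarrow> bool" where
  "is_functor C E F \<longleftrightarrow>
     (\<forall>x\<in>Ob C. FO F x \<in> Ob E) \<and>
     (\<forall>x\<in>Ob C. \<forall>y\<in>Ob C. \<forall>f\<in>hom C x y. FA F f \<in> hom E (FO F x) (FO F y)) \<and>
     (\<forall>x\<in>Ob C. FA F (Idt C x) = Idt E (FO F x)) \<and>
     (\<forall>f\<in>Ar C. \<forall>g\<in>Ar C. Tgt C f = Src C g \<longrightarrow> FA F (Cmp C f g) = Cmp E (FA F f) (FA F g))"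

record ('o, 'a, 'v) psh =
  PO :: "'o \<Rightarrow> 'v set"
  PA :: "'a \<Rightarrow> 'v \<Rightarrow> 'v"

definition presheaf :: "('o, 'a) cat \<Rightarrow> ('o, 'a, 'v) psh \<Rightarrow> bool" where
  "presheaf C P \<longleftrightarrow>
     (\<forall>x\<in>Ob C. \<forall>y\<in>Ob C. \<forall>f\<in>hom C x y. \<forall>v\<in>PO P y. PA P f v \<in> PO P x) \<and>
     (\<forall>x\<in>Ob C. \<forall>v\<in>PO P x. PA P (Idt C x) v = v) \<and>
     (\<forall>f\<in>Ar C. \<forall>g\<in>Ar C. Tgt C f = Src C g \<longrightarrow>
        (\<forall>v\<in>PO P (Tgt C g). PA P (Cmp C f g) v = PA P f (PA P g v)))"

definition psh_iso :: "('o, 'a) cat \<Rightarrow> ('o, 'a, 'v) psh \<Rightarrow> ('o, 'a, 'w) psh \<Rightarrow> bool" where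
  "psh_iso C P Q \<longleftrightarrow> (\<exists>\<eta>.
     (\<forall>x\<in>Ob C. bij_betw (\<eta> x) (PO P x) (PO Q x)) \<and>
     (\<forall>x\<in>Ob C. \<forall>y\<in>Ob C. \<forall>f\<in>hom C x y. \<forall>v\<in>PO P y. \<eta> x (PA P f v) = PA Q f (\<eta> y v)))"

definition pb :: "('o1, 'a1, 'o2, 'a2) ftr \<Rightarrow> ('o2, 'a2, 'v) psh \<Rightarrow> ('o1, 'a1, 'v) psh" where
  "pb F \<psi> = \<lparr>PO = (\<lambda>x. PO \<psi> (FO F x)), PA = (\<lambda>f. PA \<psi> (FA F f))\<rparr>"

text \<open>Left Kan extension F_! chi (y) = coend over x of Y(y, F x) x chi(x),
  realised as a quotient of triples (x, f, v) by the equivalence relation generated by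
  (x', f ; F g, w) ~ (x, f, chi(g) w) for g : x -> x'.\<close>
definition lan_triples :: "('xo, 'xa) cat \<Rightarrow> ('yo, 'ya) cat \<Rightarrow> ('xo, 'xa, 'yo, 'ya) ftr
    \<Rightarrow> ('xo, 'xa, 'v) psh \<Rightarrow> 'yo \<Rightarrow> ('xo \<times> 'ya \<times> 'v) set" where
  "lan_triples X Y F \<chi> y = {(x, f, v). x \<in> Ob X \<and> f \<in> hom Y y (FO F x) \<and> v \<in> PO \<chi> x}"

definition lan_gen :: "('xo, 'xa) cat \<Rightarrow> ('yo, 'ya) cat \<Rightarrow> ('xo, 'xa, 'yo, 'ya) ftr
    \<Rightarrow> ('xo, 'xa, 'v) psh \<Rightarrow> 'yo \<Rightarrow> (('xo \<times> 'ya \<times> 'v) \<times> ('xo \<times> 'ya \<times> 'v)) set" where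
  "lan_gen X Y F \<chi> y = {((x', Cmp Y f (FA F g), w), (x, f, PA \<chi> g w)) | x x' g f w.
      x \<in> Ob X \<and> x' \<in> Ob X \<and> g \<in> hom X x x' \<and> f \<in> hom Y y (FO F x) \<and> w \<in> PO \<chi> x'}"

definition lan_rel :: "('xo, 'xa) cat \<Rightarrow> ('yo, 'ya) cat \<Rightarrow> ('xo, 'xa, 'yo, 'ya) ftr
    \<Rightarrow> ('xo, 'xa, 'v) psh \<Rightarrow> 'yo \<Rightarrow> (('xo \<times> 'ya \<times> 'v) \<times> ('xo \<times> 'ya \<times> 'v)) set" where
  "lan_rel X Y F \<chi> y = ((lan_gen X Y F \<chi> y \<union> (lan_gen X Y F \<chi> y)\<inverse>)\<^sup>*)
      \<inter> (lan_triples X Y F \<chi> y \<times> lan_triples X Y F \<chi> y)"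

definition lan :: "('xo, 'xa) cat \<Rightarrow> ('yo, 'ya) cat \<Rightarrow> ('xo, 'xa, 'yo, 'ya) ftr
    \<Rightarrow> ('xo, 'xa, 'v) psh \<Rightarrow> ('yo, 'ya, ('xo \<times> 'ya \<times> 'v) set) psh" where
  "lan X Y F \<chi> =
     \<lparr>PO = (\<lambda>y. lan_triples X Y F \<chi> y // lan_rel X Y F \<chi> y),
      PA = (\<lambda>h S. let (x, f, v) = (SOME s. s \<in> S)
                   in lan_rel X Y F \<chi> (Src Y h) `` {(x, Cmp Y h f, v)})\<rparr>"

definition refinement_system :: "('do, 'da) cat \<Rightarrow> ('to, 'ta) cat \<Rightarrow> ('do, 'da, 'to, 'ta) ftr \<Rightarrow> bool" where
  "refinement_system D T t \<longleftrightarrow> category D \<and> category T \<and> is_functor D T t"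

definition derivs :: "('do, 'da) cat \<Rightarrow> ('to, 'ta) cat \<Rightarrow> ('do, 'da, 'to, 'ta) ftr
    \<Rightarrow> 'do \<Rightarrow> 'ta \<Rightarrow> 'do \<Rightarrow> 'da set" where
  "derivs D T t P c Q = {\<alpha> \<in> hom D P Q. FA t \<alpha> = c}"

definition Bplus :: "('do, 'da) cat \<Rightarrow> ('to, 'ta) cat \<Rightarrow> ('do, 'da, 'to, 'ta) ftr \<Rightarrow> 'to
    \<Rightarrow> ('do \<times> 'ta, ('do \<times> 'ta) \<times> 'da \<times> ('do \<times> 'ta)) cat" where
  "Bplus D T t B =
    (let Os = {(P, c). P \<in> Ob D \<and> c \<in> hom T (FO t P) B} in
     \<lparr>Ob = Os,
      Ar = {(x1, \<alpha>, x2). x1 \<in> Os \<and> x2 \<in> Os \<and>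
              (\<exists>e. \<alpha> \<in> derivs D T t (fst x1) e (fst x2) \<and> snd x1 = Cmp T e (snd x2))},
      Src = (\<lambda>(x1, \<alpha>, x2). x1), Tgt = (\<lambda>(x1, \<alpha>, x2). x2),
      Idt = (\<lambda>x. (x, Idt D (fst x), x)),
      Cmp = (\<lambda>(x1, \<alpha>, x2) (y1, \<beta>, y2). (x1, Cmp D \<alpha> \<beta>, y2))\<rparr>)"

definition Bminus_op :: "('do, 'da) cat \<Rightarrow> ('to, 'ta) cat \<Rightarrow> ('do, 'da, 'to, 'ta) ftr \<Rightarrow> 'to
    \<Rightarrow> ('ta \<times> 'do, ('ta \<times> 'do) \<times> 'da \<times> ('ta \<times> 'do)) cat" where
  "Bminus_op D T t B =
    (let Os = {(d, R). R \<in> Ob D \<and> d \<in> hom T B (FO t R)} in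
     \<lparr>Ob = Os,
      Ar = {(y1, \<gamma>, y2). y1 \<in> Os \<and> y2 \<in> Os \<and>
              (\<exists>e. \<gamma> \<in> derivs D T t (snd y1) e (snd y2) \<and> Cmp T (fst y1) e = fst y2)},
      Src = (\<lambda>(y1, \<gamma>, y2). y1), Tgt = (\<lambda>(y1, \<gamma>, y2). y2),
      Idt = (\<lambda>y. (y, Idt D (snd y), y)),
      Cmp = (\<lambda>(x1, \<alpha>, x2) (y1, \<beta>, y2). (x1, Cmp D \<alpha> \<beta>, y2))\<rparr>)"

definition Bminus :: "('do, 'da) cat \<Rightarrow> ('to, 'ta) cat \<Rightarrow> ('do, 'da, 'to, 'ta) ftr \<Rightarrow> 'to
    \<Rightarrow> ('ta \<times> 'do, ('ta \<times> 'do) \<times> 'da \<times> ('ta \<times> 'do)) cat" where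
  "Bminus D T t B = opc (Bminus_op D T t B)"

definition cplus :: "('to, 'ta) cat \<Rightarrow> 'ta
    \<Rightarrow> ('do \<times> 'ta, ('do \<times> 'ta) \<times> 'da \<times> ('do \<times> 'ta), 'do \<times> 'ta, ('do \<times> 'ta) \<times> 'da \<times> ('do \<times> 'ta)) ftr" where
  "cplus T c = (let g = (\<lambda>(P, e). (P, Cmp T e c)) in
     \<lparr>FO = g, FA = (\<lambda>(x1, \<alpha>, x2). (g x1, \<alpha>, g x2))\<rparr>)"

definition cminus :: "('to, 'ta) cat \<Rightarrow> 'ta
    \<Rightarrow> ('ta \<times> 'do, ('ta \<times> 'do) \<times> 'da \<times> ('ta \<times> 'do), 'ta \<times> 'do, ('ta \<times> 'do) \<times> 'da \<times> ('ta \<times> 'do)) ftr" where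
  "cminus T c = (let g = (\<lambda>(d, R). (Cmp T c d, R)) in
     \<lparr>FO = g, FA = (\<lambda>(y1, \<gamma>, y2). (g y1, \<gamma>, g y2))\<rparr>)"

definition Jdg :: "('do, 'da) cat \<Rightarrow> ('to, 'ta) cat \<Rightarrow> ('do, 'da, 'to, 'ta) ftr
    \<Rightarrow> ('do \<times> 'ta \<times> 'do, ('do \<times> 'ta \<times> 'do) \<times> ('da \<times> 'da) \<times> ('do \<times> 'ta \<times> 'do)) cat" where
  "Jdg D T t =
    (let Os = {(P, c, R). P \<in> Ob D \<and> R \<in> Ob D \<and> c \<in> hom T (FO t P) (FO t R)} in
     \<lparr>Ob = Os,
      Ar = {((P1, c1, R1), (\<beta>, \<gamma>), (P2, c2, R2)). (P1, c1, R1) \<in> Os \<and> (P2, c2, R2) \<in> Os \<and>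
              (\<exists>e e'. \<beta> \<in> derivs D T t P1 e P2 \<and> \<gamma> \<in> derivs D T t R2 e' R1 \<and>
                      c1 = Cmp T (Cmp T e c2) e')},
      Src = (\<lambda>(j1, _, j2). j1), Tgt = (\<lambda>(j1, _, j2). j2),
      Idt = (\<lambda>(P, c, R). ((P, c, R), (Idt D P, Idt D R), (P, c, R))),
      Cmp = (\<lambda>(j1, (\<beta>, \<gamma>), j2) (k1, (\<beta>', \<gamma>'), k2). (j1, (Cmp D \<beta> \<beta>', Cmp D \<gamma>' \<gamma>), k2))\<rparr>)"

definition Der :: "('do, 'da) cat \<Rightarrow> ('to, 'ta) cat \<Rightarrow> ('do, 'da, 'to, 'ta) ftr
    \<Rightarrow> ('do \<times> 'ta \<times> 'do, ('do \<times> 'ta \<times> 'do) \<times> ('da \<times> 'da) \<times> ('do \<times> 'ta \<times> 'do), 'da) psh" where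
  "Der D T t = \<lparr>PO = (\<lambda>(P, c, R). derivs D T t P c R),
                PA = (\<lambda>(j1, (\<beta>, \<gamma>), j2) \<alpha>. Cmp D (Cmp D \<beta> \<alpha>) \<gamma>)\<rparr>"

text \<open>The bracket functor B^+ x B^- -> Jdg(t), on objects and on pairs of arrows
  (an arrow of B^- is an arrow (y1, gamma, y2) of Bminus_op read backwards).\<close>
definition bracketO :: "('to, 'ta) cat \<Rightarrow> 'do \<times> 'ta \<Rightarrow> 'ta \<times> 'do \<Rightarrow> 'do \<times> 'ta \<times> 'do" where
  "bracketO T x y = (fst x, Cmp T (snd x) (fst y), snd y)"

definition bracketA :: "('to, 'ta) cat \<Rightarrow> ('do \<times> 'ta) \<times> 'da \<times> ('do \<times> 'ta)
    \<Rightarrow> ('ta \<times> 'do) \<times> 'da \<times> ('ta \<times> 'do) \<Rightarrow> ('do \<times> 'ta \<times> 'do) \<times> ('da \<times> 'da) \<times> ('do \<times> 'ta \<times> 'do)" where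
  "bracketA T f g = (case f of (x1, \<beta>, x2) \<Rightarrow> case g of (y1, \<gamma>, y2) \<Rightarrow>
      (bracketO T x1 y2, (\<beta>, \<gamma>), bracketO T x2 y1))"

text \<open>phi^{perp_B}: y |-> natural transformations phi => Der(<- | y>_B).
  Natural transformations are represented as extensional families of functions.\<close>
definition perp :: "('do, 'da) cat \<Rightarrow> ('to, 'ta) cat \<Rightarrow> ('do, 'da, 'to, 'ta) ftr \<Rightarrow> 'to
    \<Rightarrow> ('do \<times> 'ta, ('do \<times> 'ta) \<times> 'da \<times> ('do \<times> 'ta), 'v) psh
    \<Rightarrow> ('ta \<times> 'do, ('ta \<times> 'do) \<times> 'da \<times> ('ta \<times> 'do), ('do \<times> 'ta) \<Rightarrow> 'v \<Rightarrow> 'da) psh" where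
  "perp D T t B \<phi> =
    (let BP = Bplus D T t B; BM = Bminus D T t B in
     \<lparr>PO = (\<lambda>y. {\<theta> \<in> (\<Pi>\<^sub>E x\<in>Ob BP. (PO \<phi> x \<rightarrow>\<^sub>E PO (Der D T t) (bracketO T x y))).
                  \<forall>f\<in>Ar BP. \<forall>v\<in>PO \<phi> (Tgt BP f).
                    \<theta> (Src BP f) (PA \<phi> f v)
                      = PA (Der D T t) (bracketA T f (Idt BM y)) (\<theta> (Tgt BP f) v)}),
      PA = (\<lambda>g \<theta>. (\<lambda>x\<in>Ob BP. \<lambda>v\<in>PO \<phi> x.
                      PA (Der D T t) (bracketA T (Idt BP x) g) (\<theta> x v)))\<rparr>)"

end

theory Submission imports Defs begin

lemma homI: "f \<in> Ar C \<Longrightarrow> Src C f = x \<Longrightarrow> Tgt C f = y \<Longrightarrow> f \<in> hom C x y" by (simp add: hom_def)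
lemma homD: "f \<in> hom C x y \<Longrightarrow> f \<in> Ar C \<and> Src C f = x \<and> Tgt C f = y" by (simp add: hom_def)

lemma cat_ob: "category C \<Longrightarrow> f \<in> hom C x y \<Longrightarrow> x \<in> Ob C \<and> y \<in> Ob C"
  unfolding category_def hom_def by auto
lemma cat_id: "category C \<Longrightarrow> x \<in> Ob C \<Longrightarrow> Idt C x \<in> hom C x x"
  unfolding category_def by auto
lemma cat_comp: "category C \<Longrightarrow> f \<in> hom C x y \<Longrightarrow> g \<in> hom C y z \<Longrightarrow> Cmp C f g \<in> hom C x z"
  using cat_ob[of C f x y] cat_ob[of C g y z] unfolding category_def by blast
lemma cat_idl: "category C \<Longrightarrow> f \<in> hom C x y \<Longrightarrow> Cmp C (Idt C x) f = f"
  unfolding category_def hom_def by auto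
lemma cat_idr: "category C \<Longrightarrow> f \<in> hom C x y \<Longrightarrow> Cmp C f (Idt C y) = f"
  unfolding category_def hom_def by auto
lemma cat_assoc: "category C \<Longrightarrow> f \<in> hom C x y \<Longrightarrow> g \<in> hom C y z \<Longrightarrow> h \<in> hom C z w
   \<Longrightarrow> Cmp C (Cmp C f g) h = Cmp C f (Cmp C g h)"
  unfolding category_def hom_def by auto

lemma fun_hom: "is_functor C E F \<Longrightarrow> category C \<Longrightarrow> f \<in> hom C x y \<Longrightarrow> FA F f \<in> hom E (FO F x) (FO F y)"
  using cat_ob[of C f x y] unfolding is_functor_def by blast
lemma fun_ob: "is_functor C E F \<Longrightarrow> x \<in> Ob C \<Longrightarrow> FO F x \<in> Ob E"
  unfolding is_functor_def by blast
lemma fun_id: "is_functor C E F \<Longrightarrow> x \<in> Ob C \<Longrightarrow> FA F (Idt C x) = Idt E (FO F x)"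
  unfolding is_functor_def by blast
lemma fun_comp: "is_functor C E F \<Longrightarrow> f \<in> hom C x y \<Longrightarrow> g \<in> hom C y z \<Longrightarrow> FA F (Cmp C f g) = Cmp E (FA F f) (FA F g)"
  unfolding is_functor_def hom_def by (metis (mono_tags, lifting) mem_Collect_eq)

lemma Bplus_simps:
  "Ob (Bplus D T t B) = {(P, c). P \<in> Ob D \<and> c \<in> hom T (FO t P) B}"
  "Src (Bplus D T t B) (x1,\<alpha>,x2) = x1"
  "Tgt (Bplus D T t B) (x1,\<alpha>,x2) = x2"
  "Idt (Bplus D T t B) x = (x, Idt D (fst x), x)"
  "Cmp (Bplus D T t B) (x1,\<alpha>,x2) (y1,\<beta>,y2) = (x1, Cmp D \<alpha> \<beta>, y2)"
  by (simp_all add: Bplus_def Let_def)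

lemma hom_Bplus: "h \<in> hom (Bplus D T t B) x y \<longleftrightarrow> (\<exists>\<alpha>. h = (x,\<alpha>,y) \<and> x \<in> Ob (Bplus D T t B) \<and> y \<in> Ob (Bplus D T t B)
   \<and> \<alpha> \<in> hom D (fst x) (fst y) \<and> snd x = Cmp T (FA t \<alpha>) (snd y))"
  unfolding hom_def Bplus_def derivs_def Let_def by (cases h) auto

lemma Ar_Bplus: "f \<in> Ar (Bplus D T t B) \<longleftrightarrow> f \<in> hom (Bplus D T t B) (Src (Bplus D T t B) f) (Tgt (Bplus D T t B) f)"
  by (simp add: hom_def)

lemma Bminus_simps:
  "Ob (Bminus D T t B) = {(d, R). R \<in> Ob D \<and> d \<in> hom T B (FO t R)}"
  "Idt (Bminus D T t B) y = (y, Idt D (snd y), y)"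
  by (simp_all add: Bminus_def Bminus_op_def opc_def Let_def)

lemma hom_Bminus: "g \<in> hom (Bminus D T t B) y y' \<longleftrightarrow> (\<exists>\<gamma>. g = (y',\<gamma>,y) \<and> y \<in> Ob (Bminus D T t B) \<and> y' \<in> Ob (Bminus D T t B)
   \<and> \<gamma> \<in> hom D (snd y') (snd y) \<and> Cmp T (fst y') (FA t \<gamma>) = fst y)"
  unfolding hom_def Bminus_def Bminus_op_def opc_def derivs_def Let_def by (cases g) auto

lemma cplus_simps: "FO (cplus T c) (P,e) = (P, Cmp T e c)"
  "FA (cplus T c) (x1,\<alpha>,x2) = (FO (cplus T c) x1, \<alpha>, FO (cplus T c) x2)"
  by (simp_all add: cplus_def Let_def)
lemma cminus_simps: "FO (cminus T c) (d,R) = (Cmp T c d, R)"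
  "FA (cminus T c) (x1,\<alpha>,x2) = (FO (cminus T c) x1, \<alpha>, FO (cminus T c) x2)"
  by (simp_all add: cminus_def Let_def)


locale rsys =
  fixes D :: "('do,'da) cat" and T :: "('to,'ta) cat" and t :: "('do,'da,'to,'ta) ftr"
  assumes rs: "refinement_system D T t"
begin

lemma catD: "category D" and catT: "category T" and funt: "is_functor D T t"
  using rs unfolding refinement_system_def by auto

lemmas Dob = cat_ob[OF catD] and Did = cat_id[OF catD] and Dcomp = cat_comp[OF catD]
  and Didl = cat_idl[OF catD] and Didr = cat_idr[OF catD] and Dassoc = cat_assoc[OF catD]
lemmas Tob = cat_ob[OF catT] and Tid = cat_id[OF catT] and Tcomp = cat_comp[OF catT]
  and Tidl = cat_idl[OF catT] and Tidr = cat_idr[OF catT] and Tassoc = cat_assoc[OF catT]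
lemmas thom = fun_hom[OF funt catD] and tob = fun_ob[OF funt] and tid = fun_id[OF funt]
  and tcomp = fun_comp[OF funt]

lemma Bp_homE:
  assumes "h \<in> hom (Bplus D T t X) x y"
  obtains P e Q e' \<alpha> where "x = (P,e)" "y = (Q,e')" "h = ((P,e),\<alpha>,(Q,e'))" "P \<in> Ob D" "Q \<in> Ob D"
    "e \<in> hom T (FO t P) X" "e' \<in> hom T (FO t Q) X" "\<alpha> \<in> hom D P Q" "e = Cmp T (FA t \<alpha>) e'"
  using assms unfolding hom_Bplus Bplus_simps by auto

lemma Bp_homI:
  "P \<in> Ob D \<Longrightarrow> e' \<in> hom T (FO t Q) X \<Longrightarrow> \<alpha> \<in> hom D P Q \<Longrightarrow> e = Cmp T (FA t \<alpha>) e'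
   \<Longrightarrow> ((P,e),\<alpha>,(Q,e')) \<in> hom (Bplus D T t X) (P,e) (Q,e')"
proof -
  assume a: "P \<in> Ob D" "e' \<in> hom T (FO t Q) X" "\<alpha> \<in> hom D P Q" "e = Cmp T (FA t \<alpha>) e'"
  have "e \<in> hom T (FO t P) X" using a Tcomp[OF thom[OF a(3)] a(2)] by simp
  then show ?thesis unfolding hom_Bplus Bplus_simps using a Dob[OF a(3)] by auto
qed

lemma Bp_id: "x \<in> Ob (Bplus D T t X) \<Longrightarrow> Idt (Bplus D T t X) x \<in> hom (Bplus D T t X) x x"
  unfolding Bplus_simps hom_Bplus using Did tid Tidl by auto

lemma Bp_comp: "f \<in> hom (Bplus D T t X) x y \<Longrightarrow> g \<in> hom (Bplus D T t X) y z \<Longrightarrow>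
   Cmp (Bplus D T t X) f g \<in> hom (Bplus D T t X) x z"
proof -
  assume f: "f \<in> hom (Bplus D T t X) x y" and g: "g \<in> hom (Bplus D T t X) y z"
  from f obtain P e Q e' \<alpha> where f1: "x = (P,e)" "y = (Q,e')" "f = ((P,e),\<alpha>,(Q,e'))" "P \<in> Ob D" "Q \<in> Ob D"
    "e \<in> hom T (FO t P) X" "e' \<in> hom T (FO t Q) X" "\<alpha> \<in> hom D P Q" "e = Cmp T (FA t \<alpha>) e'" by (rule Bp_homE)
  from g obtain R e'' \<beta> where g1: "z = (R,e'')" "g = ((Q,e'),\<beta>,(R,e''))" "R \<in> Ob D"
    "e'' \<in> hom T (FO t R) X" "\<beta> \<in> hom D Q R" "e' = Cmp T (FA t \<beta>) e''"
    by (rule Bp_homE) (use f1 in auto)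
  have "e = Cmp T (FA t (Cmp D \<alpha> \<beta>)) e''"
    using f1 g1 by (simp add: tcomp[OF f1(8) g1(5)] Tassoc[OF thom[OF f1(8)] thom[OF g1(5)] g1(4)])
  then show ?thesis using f1 g1 by (auto simp: Bplus_simps intro!: Bp_homI Dcomp)
qed

lemma Bp_assoc: "f \<in> hom (Bplus D T t X) x y \<Longrightarrow> g \<in> hom (Bplus D T t X) y z \<Longrightarrow> h \<in> hom (Bplus D T t X) z w \<Longrightarrow>
   Cmp (Bplus D T t X) (Cmp (Bplus D T t X) f g) h = Cmp (Bplus D T t X) f (Cmp (Bplus D T t X) g h)"
  by (auto simp: hom_Bplus Bplus_simps Dassoc)

lemma Bp_idl: "f \<in> hom (Bplus D T t X) x y \<Longrightarrow> Cmp (Bplus D T t X) (Idt (Bplus D T t X) x) f = f"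
  by (auto simp: hom_Bplus Bplus_simps Didl)
lemma Bp_idr: "f \<in> hom (Bplus D T t X) x y \<Longrightarrow> Cmp (Bplus D T t X) f (Idt (Bplus D T t X) y) = f"
  by (auto simp: hom_Bplus Bplus_simps Didr)

end


lemma rt_inv: "(\<And>a b. (a,b)\<in>r \<Longrightarrow> g a = g b) \<Longrightarrow> (a,b) \<in> (r \<union> r\<inverse>)\<^sup>* \<Longrightarrow> g a = g b"
proof -
  assume h: "\<And>a b. (a,b)\<in>r \<Longrightarrow> g a = g b" and ab: "(a,b) \<in> (r \<union> r\<inverse>)\<^sup>*"
  from ab show ?thesis
    by (induction rule: rtrancl_induct) (auto dest: h)
qed

lemma rt_map: "(\<And>a b. (a,b)\<in>r \<Longrightarrow> (h a, h b) \<in> r') \<Longrightarrow> (a,b) \<in> (r \<union> r\<inverse>)\<^sup>* \<Longrightarrow> (h a, h b) \<in> (r' \<union> r'\<inverse>)\<^sup>*"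
proof -
  assume hh: "\<And>a b. (a,b)\<in>r \<Longrightarrow> (h a, h b) \<in> r'" and ab: "(a,b) \<in> (r \<union> r\<inverse>)\<^sup>*"
  from ab show ?thesis
  proof (induction rule: rtrancl_induct)
    case base then show ?case by simp
  next
    case (step y z)
    then have "(h y, h z) \<in> r' \<union> r'\<inverse>" using hh by auto
    with step show ?case by (meson rtrancl.rtrancl_into_rtrancl)
  qed
qed

lemma PO_Der_br: "PO (Der D T t) (bracketO T x y) = derivs D T t (fst x) (Cmp T (snd x) (fst y)) (snd y)"
  by (simp add: Der_def bracketO_def)
lemma PA_Der_br: "PA (Der D T t) (bracketA T f g) \<alpha> = Cmp D (Cmp D (fst (snd f)) \<alpha>) (fst (snd g))"
  by (cases f; cases g) (simp add: Der_def bracketA_def)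

lemma perp_PO: "PO (perp D T t X \<psi>) y = {\<theta> \<in> (\<Pi>\<^sub>E x\<in>Ob (Bplus D T t X). (PO \<psi> x \<rightarrow>\<^sub>E derivs D T t (fst x) (Cmp T (snd x) (fst y)) (snd y))).
   \<forall>f\<in>Ar (Bplus D T t X). \<forall>v\<in>PO \<psi> (Tgt (Bplus D T t X) f).
     \<theta> (Src (Bplus D T t X) f) (PA \<psi> f v) = Cmp D (Cmp D (fst (snd f)) (\<theta> (Tgt (Bplus D T t X) f) v)) (Idt D (snd y))}"
  by (simp add: perp_def Let_def PO_Der_br PA_Der_br Bminus_simps)
lemma perp_PA: "PA (perp D T t X \<psi>) g \<theta> = (\<lambda>x\<in>Ob (Bplus D T t X). \<lambda>v\<in>PO \<psi> x. Cmp D (Cmp D (Idt D (fst x)) (\<theta> x v)) (fst (snd g)))"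
  by (simp add: perp_def Let_def PA_Der_br Bplus_simps)

lemma derivs_iff: "\<alpha> \<in> derivs D T t P e Q \<longleftrightarrow> \<alpha> \<in> hom D P Q \<and> FA t \<alpha> = e"
  by (simp add: derivs_def)


lemma perp_val: "\<theta> \<in> PO (perp D T t X \<psi>) y \<Longrightarrow> x \<in> Ob (Bplus D T t X) \<Longrightarrow> v \<in> PO \<psi> x
   \<Longrightarrow> \<theta> x v \<in> derivs D T t (fst x) (Cmp T (snd x) (fst y)) (snd y)"
  unfolding perp_PO by (auto dest!: PiE_mem)

lemma perp_ext: "\<theta> \<in> PO (perp D T t X \<psi>) y \<Longrightarrow> \<theta> \<in> (\<Pi>\<^sub>E x\<in>Ob (Bplus D T t X). (PO \<psi> x \<rightarrow>\<^sub>E derivs D T t (fst x) (Cmp T (snd x) (fst y)) (snd y)))"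
  unfolding perp_PO by blast

lemma perp_nat: "\<theta> \<in> PO (perp D T t X \<psi>) y \<Longrightarrow> f \<in> Ar (Bplus D T t X) \<Longrightarrow> v \<in> PO \<psi> (Tgt (Bplus D T t X) f)
   \<Longrightarrow> \<theta> (Src (Bplus D T t X) f) (PA \<psi> f v) = Cmp D (Cmp D (fst (snd f)) (\<theta> (Tgt (Bplus D T t X) f) v)) (Idt D (snd y))"
  unfolding perp_PO by blast

lemma perp_I: "\<theta> \<in> (\<Pi>\<^sub>E x\<in>Ob (Bplus D T t X). (PO \<psi> x \<rightarrow>\<^sub>E derivs D T t (fst x) (Cmp T (snd x) (fst y)) (snd y)))
  \<Longrightarrow> (\<And>f v. f \<in> Ar (Bplus D T t X) \<Longrightarrow> v \<in> PO \<psi> (Tgt (Bplus D T t X) f)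
   \<Longrightarrow> \<theta> (Src (Bplus D T t X) f) (PA \<psi> f v) = Cmp D (Cmp D (fst (snd f)) (\<theta> (Tgt (Bplus D T t X) f) v)) (Idt D (snd y)))
  \<Longrightarrow> \<theta> \<in> PO (perp D T t X \<psi>) y"
  unfolding perp_PO by blast

lemma pb_PO: "PO (pb F P) y = PO P (FO F y)" by (simp add: pb_def)
lemma pb_PA: "PA (pb F P) g = PA P (FA F g)" by (simp add: pb_def)

locale L = rsys D T t for D :: "('do,'da) cat" and T :: "('to,'ta) cat" and t :: "('do,'da,'to,'ta) ftr" +
  fixes A B :: 'to and c :: 'ta and \<phi> :: "('do \<times> 'ta, ('do \<times> 'ta) \<times> 'da \<times> ('do \<times> 'ta), 'v) psh"
  assumes AOb: "A \<in> Ob T" and BOb: "B \<in> Ob T" and chom: "c \<in> hom T A B"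
    and pphi: "presheaf (Bplus D T t A) \<phi>"
begin

abbreviation "PPA \<equiv> Bplus D T t A"
abbreviation "PPB \<equiv> Bplus D T t B"
abbreviation "FF \<equiv> cplus T c :: ('do \<times> 'ta, ('do \<times> 'ta) \<times> 'da \<times> ('do \<times> 'ta), 'do \<times> 'ta, ('do \<times> 'ta) \<times> 'da \<times> ('do \<times> 'ta)) ftr"
abbreviation "rel \<equiv> lan_rel PPA PPB FF \<phi>"
abbreviation "gen \<equiv> lan_gen PPA PPB FF \<phi>"
abbreviation "trip \<equiv> lan_triples PPA PPB FF \<phi>"
abbreviation "Lphi \<equiv> lan PPA PPB FF \<phi>"

lemma FFO: "FO FF (P,e) = (P, Cmp T e c)" by (rule cplus_simps(1))
lemma FFA: "FA FF (x1,\<alpha>,x2) = (FO FF x1, \<alpha>, FO FF x2)" by (rule cplus_simps(2))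

lemma F_ob: "x \<in> Ob PPA \<Longrightarrow> FO FF x \<in> Ob PPB"
  using Tcomp chom by (auto simp: Bplus_simps FFO FFA)

lemma F_hom: assumes "g \<in> hom PPA x y" shows "FA FF g \<in> hom PPB (FO FF x) (FO FF y)"
proof -
  from assms obtain P e Q e' \<alpha> where f1: "x = (P,e)" "y = (Q,e')" "g = ((P,e),\<alpha>,(Q,e'))" "P \<in> Ob D" "Q \<in> Ob D"
    "e \<in> hom T (FO t P) A" "e' \<in> hom T (FO t Q) A" "\<alpha> \<in> hom D P Q" "e = Cmp T (FA t \<alpha>) e'" by (rule Bp_homE)
  have "Cmp T e c = Cmp T (FA t \<alpha>) (Cmp T e' c)"
    using f1 Tassoc[OF thom[OF f1(8)] f1(7) chom] by simp
  then show ?thesis using f1 by (auto simp: FFO FFA intro!: Bp_homI Tcomp chom)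
qed

lemma F_cmp: "FA FF (Cmp PPA (x1,\<alpha>,x2) (y1,\<beta>,y2)) = Cmp PPB (FA FF (x1,\<alpha>,x2)) (FA FF (y1,\<beta>,y2))"
  by (simp add: FFO FFA Bplus_simps)
lemma F_id: "FA FF (Idt PPA x) = Idt PPB (FO FF x)"
  by (cases x) (simp add: FFO FFA Bplus_simps)

lemma ph_hom: "g \<in> hom PPA x y \<Longrightarrow> v \<in> PO \<phi> y \<Longrightarrow> PA \<phi> g v \<in> PO \<phi> x"
proof -
  assume g: "g \<in> hom PPA x y" and v: "v \<in> PO \<phi> y"
  have "x \<in> Ob PPA" "y \<in> Ob PPA" using g unfolding hom_Bplus by auto
  then show ?thesis using pphi g v unfolding presheaf_def by blast
qed
lemma ph_id: "x \<in> Ob PPA \<Longrightarrow> v \<in> PO \<phi> x \<Longrightarrow> PA \<phi> (Idt PPA x) v = v"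
  using pphi unfolding presheaf_def by blast

lemma gen_iff: "(a, b) \<in> gen Y \<longleftrightarrow> (\<exists>x x' g f w. a = (x', Cmp PPB f (FA FF g), w) \<and> b = (x, f, PA \<phi> g w) \<and>
   x \<in> Ob PPA \<and> x' \<in> Ob PPA \<and> g \<in> hom PPA x x' \<and> f \<in> hom PPB Y (FO FF x) \<and> w \<in> PO \<phi> x')"
  unfolding lan_gen_def by blast

lemma trip_iff: "(x,f,v) \<in> trip Y \<longleftrightarrow> x \<in> Ob PPA \<and> f \<in> hom PPB Y (FO FF x) \<and> v \<in> PO \<phi> x"
  unfolding lan_triples_def by simp

lemma rel_sub: "rel Y \<subseteq> trip Y \<times> trip Y"
  unfolding lan_rel_def by (rule Int_lower2)

lemma rel_mk: "(a,b) \<in> (gen Y \<union> (gen Y)\<inverse>)\<^sup>* \<Longrightarrow> a \<in> trip Y \<Longrightarrow> b \<in> trip Y \<Longrightarrow> (a,b) \<in> rel Y"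
  unfolding lan_rel_def by (rule IntI, assumption, rule SigmaI)

lemma rel_rt: "(a,b) \<in> rel Y \<Longrightarrow> (a,b) \<in> (gen Y \<union> (gen Y)\<inverse>)\<^sup>*"
  unfolding lan_rel_def by (rule IntD1)

lemma rel_equiv: "equiv (trip Y) (rel Y)"
proof (rule equivI)
  show "rel Y \<subseteq> trip Y \<times> trip Y" by (rule rel_sub)
  show "refl_on (trip Y) (rel Y)"
    by (rule refl_onI, rule rel_mk, rule rtrancl_refl)
  have s: "sym ((gen Y \<union> (gen Y)\<inverse>)\<^sup>*)" by (simp add: sym_Un_converse sym_rtrancl)
  show "sym (rel Y)"
  proof (rule symI)
    fix a b assume ab: "(a,b) \<in> rel Y"
    have ab2: "(a,b) \<in> trip Y \<times> trip Y" by (rule subsetD[OF rel_sub ab])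
    have "(b,a) \<in> (gen Y \<union> (gen Y)\<inverse>)\<^sup>*" using s rel_rt[OF ab] by (rule symD)
    then show "(b,a) \<in> rel Y" by (rule rel_mk[OF _ SigmaD2[OF ab2] SigmaD1[OF ab2]])
  qed
  show "trans (rel Y)"
  proof (rule transI)
    fix a b d assume ab: "(a,b) \<in> rel Y" and bd: "(b,d) \<in> rel Y"
    have ab2: "(a,b) \<in> trip Y \<times> trip Y" by (rule subsetD[OF rel_sub ab])
    have bd2: "(b,d) \<in> trip Y \<times> trip Y" by (rule subsetD[OF rel_sub bd])
    have "(a,d) \<in> (gen Y \<union> (gen Y)\<inverse>)\<^sup>*" by (rule rtrancl_trans[OF rel_rt[OF ab] rel_rt[OF bd]])
    then show "(a,d) \<in> rel Y" by (rule rel_mk[OF _ SigmaD1[OF ab2] SigmaD2[OF bd2]])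
  qed
qed

definition cmpa :: "('do \<times> 'ta) \<times> 'da \<times> ('do \<times> 'ta) \<Rightarrow> ('do \<times> 'ta) \<times> (('do \<times> 'ta) \<times> 'da \<times> ('do \<times> 'ta)) \<times> 'v
     \<Rightarrow> ('do \<times> 'ta) \<times> (('do \<times> 'ta) \<times> 'da \<times> ('do \<times> 'ta)) \<times> 'v" where
  "cmpa h a = (fst a, Cmp PPB h (fst (snd a)), snd (snd a))"

lemma gen_I: "x \<in> Ob PPA \<Longrightarrow> x' \<in> Ob PPA \<Longrightarrow> g \<in> hom PPA x x' \<Longrightarrow> f \<in> hom PPB Y (FO FF x) \<Longrightarrow> w \<in> PO \<phi> x'
  \<Longrightarrow> ((x', Cmp PPB f (FA FF g), w), (x, f, PA \<phi> g w)) \<in> gen Y"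
  unfolding lan_gen_def mem_Collect_eq
  by (rule exI[of _ x], rule exI[of _ x'], rule exI[of _ g], rule exI[of _ f], rule exI[of _ w]) (intro conjI refl)

lemma gen_cmpa: assumes h: "h \<in> hom PPB Y' Y" and ab: "(a,b) \<in> gen Y" shows "(cmpa h a, cmpa h b) \<in> gen Y'"
proof -
  from ab obtain x x' g f w where d: "a = (x', Cmp PPB f (FA FF g), w)" "b = (x, f, PA \<phi> g w)"
    "x \<in> Ob PPA" "x' \<in> Ob PPA" "g \<in> hom PPA x x'" "f \<in> hom PPB Y (FO FF x)" "w \<in> PO \<phi> x'"
    unfolding gen_iff by blast
  have e: "Cmp PPB h (Cmp PPB f (FA FF g)) = Cmp PPB (Cmp PPB h f) (FA FF g)"
    using Bp_assoc[OF h d(6) F_hom[OF d(5)]] by simp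
  have "cmpa h a = (x', Cmp PPB (Cmp PPB h f) (FA FF g), w)" "cmpa h b = (x, Cmp PPB h f, PA \<phi> g w)"
    using d e by (simp_all add: cmpa_def)
  then show ?thesis using gen_I[OF d(3) d(4) d(5) Bp_comp[OF h d(6)] d(7)] by (simp only:)
qed

lemma trip_cmpa: assumes h: "h \<in> hom PPB Y' Y" and a: "a \<in> trip Y" shows "cmpa h a \<in> trip Y'"
proof -
  obtain x f v where av: "a = (x,f,v)" by (cases a) auto
  have 1: "x \<in> Ob PPA" "f \<in> hom PPB Y (FO FF x)" "v \<in> PO \<phi> x" using a unfolding av trip_iff by auto
  have "cmpa h a = (x, Cmp PPB h f, v)" by (simp add: av cmpa_def)
  moreover have "(x, Cmp PPB h f, v) \<in> trip Y'" unfolding trip_iff using 1 Bp_comp[OF h 1(2)] by (intro conjI)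
  ultimately show ?thesis by (simp only:)
qed

lemma rel_cmpa: assumes h: "h \<in> hom PPB Y' Y" and ab: "(a,b) \<in> rel Y" shows "(cmpa h a, cmpa h b) \<in> rel Y'"
proof (rule rel_mk)
  have "(a,b) \<in> (gen Y \<union> (gen Y)\<inverse>)\<^sup>*" by (rule rel_rt[OF ab])
  then show "(cmpa h a, cmpa h b) \<in> (gen Y' \<union> (gen Y')\<inverse>)\<^sup>*"
    by (rule rt_map[where r="gen Y", rotated]) (rule gen_cmpa[OF h])
  have ab2: "(a,b) \<in> trip Y \<times> trip Y" by (rule subsetD[OF rel_sub ab])
  show "cmpa h a \<in> trip Y'" by (rule trip_cmpa[OF h SigmaD1[OF ab2]])
  show "cmpa h b \<in> trip Y'" by (rule trip_cmpa[OF h SigmaD2[OF ab2]])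
qed

lemma cls_of: "S \<in> trip Y // rel Y \<Longrightarrow> a \<in> S \<Longrightarrow> S = rel Y `` {a} \<and> a \<in> trip Y"
proof -
  assume S: "S \<in> trip Y // rel Y" and a: "a \<in> S"
  from S obtain b where b: "b \<in> trip Y" "S = rel Y `` {b}" by (rule quotientE)
  then have ba: "(b,a) \<in> rel Y" using a by simp
  then have eq: "rel Y `` {b} = rel Y `` {a}" by (rule equiv_class_eq[OF rel_equiv])
  have "(b,a) \<in> trip Y \<times> trip Y" by (rule subsetD[OF rel_sub ba])
  then have "a \<in> trip Y" by (rule SigmaD2)
  moreover have "S = rel Y `` {a}" using b(2) eq by (rule trans)
  ultimately show ?thesis by (rule conjI[rotated])
qed

lemma cls_some: "S \<in> trip Y // rel Y \<Longrightarrow> (SOME s. s \<in> S) \<in> S"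
  by (metis in_quotient_imp_non_empty[OF rel_equiv] equals0I someI_ex)

lemma cls_in: "a \<in> trip Y \<Longrightarrow> rel Y `` {a} \<in> trip Y // rel Y"
  by (rule quotientI)
lemma cls_self: "a \<in> trip Y \<Longrightarrow> a \<in> rel Y `` {a}"
  by (rule equiv_class_self[OF rel_equiv])

lemma lan_PO: "PO Lphi Y = trip Y // rel Y" by (simp add: lan_def)
lemma lan_PA: "PA Lphi h S = rel (Src PPB h) `` {cmpa h (SOME s. s \<in> S)}"
  by (simp add: lan_def cmpa_def split: prod.split)

lemma lan_PA_cls: assumes h: "h \<in> hom PPB Y' Y" and a: "a \<in> trip Y"
  shows "PA Lphi h (rel Y `` {a}) = rel Y' `` {cmpa h a}"
proof -
  let ?s = "SOME s. s \<in> rel Y `` {a}"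
  have "?s \<in> rel Y `` {a}" by (rule cls_some[OF cls_in[OF a]])
  then have "(a, ?s) \<in> rel Y" by simp
  then have "(cmpa h a, cmpa h ?s) \<in> rel Y'" by (rule rel_cmpa[OF h])
  then have "rel Y' `` {cmpa h a} = rel Y' `` {cmpa h ?s}" by (rule equiv_class_eq[OF rel_equiv])
  moreover have "Src PPB h = Y'" using homD[OF h] by blast
  ultimately show ?thesis unfolding lan_PA by (simp only:)
qed

definition val :: "'do \<Rightarrow> ('do \<times> 'ta \<Rightarrow> 'v \<Rightarrow> 'da) \<Rightarrow> ('do \<times> 'ta) \<times> (('do \<times> 'ta) \<times> 'da \<times> ('do \<times> 'ta)) \<times> 'v \<Rightarrow> 'da" where
  "val R \<theta> a = Cmp D (Cmp D (fst (snd (fst (snd a)))) (\<theta> (fst a) (snd (snd a)))) (Idt D R)"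

lemma val_gen:
  assumes th: "\<theta> \<in> PO (perp D T t A \<phi>) (d', R)" and ab: "(a,b) \<in> gen Y"
  shows "val R \<theta> a = val R \<theta> b"
proof -
  from ab obtain x x' g f w where d: "a = (x', Cmp PPB f (FA FF g), w)" "b = (x, f, PA \<phi> g w)"
    "x \<in> Ob PPA" "x' \<in> Ob PPA" "g \<in> hom PPA x x'" "f \<in> hom PPB Y (FO FF x)" "w \<in> PO \<phi> x'"
    unfolding gen_iff by blast
  from d(5) obtain P e P' e' \<alpha> where g: "x = (P,e)" "x' = (P',e')" "g = ((P,e),\<alpha>,(P',e'))" "P \<in> Ob D" "P' \<in> Ob D"
    "e \<in> hom T (FO t P) A" "e' \<in> hom T (FO t P') A" "\<alpha> \<in> hom D P P'" "e = Cmp T (FA t \<alpha>) e'" by (rule Bp_homE)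
  from d(6) obtain \<beta> where f: "f = (Y, \<beta>, FO FF x)" "\<beta> \<in> hom D (fst Y) P"
    unfolding hom_Bplus g(1) FFO by auto
  have tw: "\<theta> x' w \<in> hom D P' R" using perp_val[OF th d(4) d(7)] g(2) by (simp add: derivs_iff)
  have gA: "g \<in> Ar PPA" "Src PPA g = x" "Tgt PPA g = x'" using homD[OF d(5)] by auto
  have tn: "\<theta> x (PA \<phi> g w) = Cmp D (Cmp D \<alpha> (\<theta> x' w)) (Idt D R)"
    using perp_nat[OF th gA(1), of w] gA d(7) g(3) by simp
  have cf: "fst (snd (Cmp PPB f (FA FF g))) = Cmp D \<beta> \<alpha>" by (simp add: f g(3) FFA Bplus_simps)
  have va: "val R \<theta> a = Cmp D (Cmp D (Cmp D \<beta> \<alpha>) (\<theta> x' w)) (Idt D R)" by (simp add: val_def d(1) cf)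
  have "val R \<theta> b = Cmp D (Cmp D \<beta> (\<theta> x (PA \<phi> g w))) (Idt D R)" by (simp add: val_def d(2) f(1))
  also have "\<dots> = Cmp D (Cmp D \<beta> (Cmp D \<alpha> (\<theta> x' w))) (Idt D R)"
    using tn Didr[OF Dcomp[OF g(8) tw]] by simp
  also have "\<dots> = val R \<theta> a" using va Dassoc[OF f(2) g(8) tw] by simp
  finally show ?thesis by simp
qed

lemma val_rel:
  assumes th: "\<theta> \<in> PO (perp D T t A \<phi>) (d', R)" and ab: "(a,b) \<in> rel Y"
  shows "val R \<theta> a = val R \<theta> b"
  by (rule rt_inv[where g="val R \<theta>" and r="gen Y", OF _ rel_rt[OF ab]]) (rule val_gen[OF th])

lemma val_der:
  assumes th: "\<theta> \<in> PO (perp D T t A \<phi>) (Cmp T c d, R)" and dh: "d \<in> hom T B (FO t R)"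
    and a: "(x,f,v) \<in> trip X"
  shows "val R \<theta> (x,f,v) \<in> derivs D T t (fst X) (Cmp T (snd X) d) R"
proof -
  have a1: "x \<in> Ob PPA" "f \<in> hom PPB X (FO FF x)" "v \<in> PO \<phi> x" using a unfolding trip_iff by auto
  obtain P e where x: "x = (P,e)" "P \<in> Ob D" "e \<in> hom T (FO t P) A" using a1(1) unfolding Bplus_simps by auto
  from a1(2) obtain \<beta> where f: "f = (X, \<beta>, (P, Cmp T e c))" "\<beta> \<in> hom D (fst X) P"
      "snd X = Cmp T (FA t \<beta>) (Cmp T e c)"
    unfolding hom_Bplus x(1) FFO by auto
  have tv: "\<theta> x v \<in> derivs D T t P (Cmp T e (Cmp T c d)) R"
    using perp_val[OF th a1(1) a1(3)] x(1) by simp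
  then have tvh: "\<theta> x v \<in> hom D P R" and tvt: "FA t (\<theta> x v) = Cmp T e (Cmp T c d)" by (simp_all add: derivs_iff)
  have v: "val R \<theta> (x,f,v) = Cmp D \<beta> (\<theta> x v)"
    using Didr[OF Dcomp[OF f(2) tvh]] by (simp add: val_def f(1))
  have tb: "FA t \<beta> \<in> hom T (FO t (fst X)) (FO t P)" by (rule thom[OF f(2)])
  have "Cmp T (snd X) d = Cmp T (FA t \<beta>) (Cmp T (Cmp T e c) d)"
    using f(3) Tassoc[OF tb Tcomp[OF x(3) chom] dh] by simp
  also have "\<dots> = Cmp T (FA t \<beta>) (Cmp T e (Cmp T c d))" using Tassoc[OF x(3) chom dh] by simp
  also have "\<dots> = FA t (Cmp D \<beta> (\<theta> x v))" using tcomp[OF f(2) tvh] tvt by simp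
  finally show ?thesis unfolding v derivs_iff using Dcomp[OF f(2) tvh] by simp
qed

definition Phi :: "'do \<Rightarrow> ('do \<times> 'ta \<Rightarrow> 'v \<Rightarrow> 'da) \<Rightarrow> 'do \<times> 'ta
   \<Rightarrow> (('do \<times> 'ta) \<times> (('do \<times> 'ta) \<times> 'da \<times> ('do \<times> 'ta)) \<times> 'v) set \<Rightarrow> 'da" where
  "Phi R \<theta> = (\<lambda>X\<in>Ob PPB. \<lambda>S\<in>PO Lphi X. val R \<theta> (SOME s. s \<in> S))"

lemma Phi_cls:
  assumes th: "\<theta> \<in> PO (perp D T t A \<phi>) (d', R)" and X: "X \<in> Ob PPB" and S: "S \<in> trip X // rel X" and a: "a \<in> S"
  shows "Phi R \<theta> X S = val R \<theta> a"
proof -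
  have "Phi R \<theta> X S = val R \<theta> (SOME s. s \<in> S)" using X S by (simp add: Phi_def lan_PO)
  moreover have "(SOME s. s \<in> S) \<in> S" by (rule cls_some[OF S])
  moreover have "S = rel X `` {a}" using cls_of[OF S a] by blast
  ultimately show ?thesis using val_rel[OF th] by auto
qed

lemma trip_id: "x \<in> Ob PPA \<Longrightarrow> v \<in> PO \<phi> x \<Longrightarrow> (x, Idt PPB (FO FF x), v) \<in> trip (FO FF x)"
  unfolding trip_iff using Bp_id[OF F_ob] by blast

lemma Phi_in:
  assumes th: "\<theta> \<in> PO (perp D T t A \<phi>) (Cmp T c d, R)" and dh: "d \<in> hom T B (FO t R)"
  shows "Phi R \<theta> \<in> PO (perp D T t B Lphi) (d, R)"
proof (rule perp_I)
  show "Phi R \<theta> \<in> (\<Pi>\<^sub>E X\<in>Ob PPB. (PO Lphi X \<rightarrow>\<^sub>E derivs D T t (fst X) (Cmp T (snd X) (fst (d,R))) (snd (d,R))))"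
    unfolding Phi_def restrict_PiE_iff
  proof (intro ballI)
    fix X S assume X: "X \<in> Ob PPB" and S: "S \<in> PO Lphi X"
    then have S': "S \<in> trip X // rel X" by (simp add: lan_PO)
    have "(SOME s. s \<in> S) \<in> trip X" using cls_of[OF S' cls_some[OF S']] by blast
    moreover obtain x f v where "(SOME s. s \<in> S) = (x,f,v)" by (rule prod_cases3)
    ultimately show "val R \<theta> (SOME s. s \<in> S) \<in> derivs D T t (fst X) (Cmp T (snd X) (fst (d,R))) (snd (d,R))"
      using val_der[OF th dh] by simp
  qed
next
  fix f S assume fA: "f \<in> Ar PPB" and S: "S \<in> PO Lphi (Tgt PPB f)"
  define X1 where "X1 = Src PPB f"
  define X2 where "X2 = Tgt PPB f"
  have fh: "f \<in> hom PPB X1 X2" using fA unfolding X1_def X2_def by (simp add: hom_def)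
  have X12: "X1 \<in> Ob PPB" "X2 \<in> Ob PPB" using fh unfolding hom_Bplus by auto
  have S': "S \<in> trip X2 // rel X2" using S by (simp add: lan_PO X2_def)
  define a where "a = (SOME s. s \<in> S)"
  have aS: "a \<in> S" unfolding a_def by (rule cls_some[OF S'])
  have Sa: "S = rel X2 `` {a}" and at: "a \<in> trip X2" using cls_of[OF S' aS] by auto
  have PAS: "PA Lphi f S = rel X1 `` {cmpa f a}" unfolding Sa by (rule lan_PA_cls[OF fh at])
  have ct: "cmpa f a \<in> trip X1" by (rule trip_cmpa[OF fh at])
  have e1: "Phi R \<theta> X1 (PA Lphi f S) = val R \<theta> (cmpa f a)"
    unfolding PAS by (rule Phi_cls[OF th X12(1) cls_in[OF ct] cls_self[OF ct]])
  have e2: "Phi R \<theta> X2 S = val R \<theta> a" by (rule Phi_cls[OF th X12(2) S' aS])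
  obtain x fa v where a3: "a = (x,fa,v)" by (rule prod_cases3)
  have a1: "x \<in> Ob PPA" "fa \<in> hom PPB X2 (FO FF x)" "v \<in> PO \<phi> x" using at unfolding a3 trip_iff by auto
  obtain P e where x: "x = (P,e)" "P \<in> Ob D" "e \<in> hom T (FO t P) A" using a1(1) unfolding Bplus_simps by auto
  from a1(2) obtain \<beta>' where fa: "fa = (X2, \<beta>', (P, Cmp T e c))" "\<beta>' \<in> hom D (fst X2) P"
    unfolding hom_Bplus x(1) FFO by auto
  from fh obtain \<beta> where fb: "f = (X1, \<beta>, X2)" "\<beta> \<in> hom D (fst X1) (fst X2)"
    unfolding hom_Bplus by auto
  have tvh: "\<theta> x v \<in> hom D P R"
    using perp_val[OF th a1(1) a1(3)] x(1) by (simp add: derivs_iff)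
  have "val R \<theta> (cmpa f a) = Cmp D (Cmp D (Cmp D \<beta> \<beta>') (\<theta> x v)) (Idt D R)"
    by (simp add: val_def cmpa_def a3 fa(1) fb(1) Bplus_simps)
  also have "\<dots> = Cmp D (Cmp D \<beta> (Cmp D \<beta>' (\<theta> x v))) (Idt D R)"
    using Dassoc[OF fb(2) fa(2) tvh] by simp
  also have "\<dots> = Cmp D (Cmp D \<beta> (val R \<theta> a)) (Idt D R)"
    using Didr[OF Dcomp[OF fa(2) tvh]] by (simp add: val_def a3 fa(1))
  finally show "Phi R \<theta> (Src PPB f) (PA Lphi f S) =
         Cmp D (Cmp D (fst (snd f)) (Phi R \<theta> (Tgt PPB f) S)) (Idt D (snd (d, R)))"
    using e1 e2 unfolding X1_def[symmetric] X2_def[symmetric] by (simp add: fb(1))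
qed

definition Psi :: "('do \<times> 'ta \<Rightarrow> (('do \<times> 'ta) \<times> (('do \<times> 'ta) \<times> 'da \<times> ('do \<times> 'ta)) \<times> 'v) set \<Rightarrow> 'da)
   \<Rightarrow> 'do \<times> 'ta \<Rightarrow> 'v \<Rightarrow> 'da" where
  "Psi \<theta>' = (\<lambda>x\<in>Ob PPA. \<lambda>v\<in>PO \<phi> x. \<theta>' (FO FF x) (rel (FO FF x) `` {(x, Idt PPB (FO FF x), v)}))"

lemma Psi_in:
  assumes th: "\<theta>' \<in> PO (perp D T t B Lphi) (d, R)" and dh: "d \<in> hom T B (FO t R)"
  shows "Psi \<theta>' \<in> PO (perp D T t A \<phi>) (Cmp T c d, R)"
proof (rule perp_I)
  show "Psi \<theta>' \<in> (\<Pi>\<^sub>E x\<in>Ob PPA. (PO \<phi> x \<rightarrow>\<^sub>E derivs D T t (fst x) (Cmp T (snd x) (fst (Cmp T c d, R))) (snd (Cmp T c d, R))))"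
    unfolding Psi_def restrict_PiE_iff
  proof (intro ballI)
    fix x v assume x: "x \<in> Ob PPA" and v: "v \<in> PO \<phi> x"
    obtain P e where xe: "x = (P,e)" "P \<in> Ob D" "e \<in> hom T (FO t P) A" using x unfolding Bplus_simps by auto
    have S1: "rel (FO FF x) `` {(x, Idt PPB (FO FF x), v)} \<in> PO Lphi (FO FF x)"
      unfolding lan_PO by (rule cls_in[OF trip_id[OF x v]])
    have "\<theta>' (FO FF x) (rel (FO FF x) `` {(x, Idt PPB (FO FF x), v)}) \<in> derivs D T t P (Cmp T (Cmp T e c) d) R"
      using perp_val[OF th F_ob[OF x] S1] xe(1) by (simp add: FFO)
    then show "\<theta>' (FO FF x) (rel (FO FF x) `` {(x, Idt PPB (FO FF x), v)}) \<in> derivs D T t (fst x) (Cmp T (snd x) (fst (Cmp T c d, R))) (snd (Cmp T c d, R))"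
      using Tassoc[OF xe(3) chom dh] xe(1) by simp
  qed
next
  fix g w assume gA: "g \<in> Ar PPA" and w: "w \<in> PO \<phi> (Tgt PPA g)"
  define x1 where "x1 = Src PPA g"
  define x2 where "x2 = Tgt PPA g"
  have gh: "g \<in> hom PPA x1 x2" using gA unfolding x1_def x2_def by (simp add: hom_def)
  have x12: "x1 \<in> Ob PPA" "x2 \<in> Ob PPA" using gh unfolding hom_Bplus by auto
  have w2: "w \<in> PO \<phi> x2" using w x2_def by simp
  have w1: "PA \<phi> g w \<in> PO \<phi> x1" by (rule ph_hom[OF gh w2])
  define Fg where "Fg = FA FF g"
  have Fgh: "Fg \<in> hom PPB (FO FF x1) (FO FF x2)" unfolding Fg_def by (rule F_hom[OF gh])
  define S2 where "S2 = rel (FO FF x2) `` {(x2, Idt PPB (FO FF x2), w)}"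
  have t2: "(x2, Idt PPB (FO FF x2), w) \<in> trip (FO FF x2)" by (rule trip_id[OF x12(2) w2])
  have "PA Lphi Fg S2 = rel (FO FF x1) `` {cmpa Fg (x2, Idt PPB (FO FF x2), w)}"
    unfolding S2_def by (rule lan_PA_cls[OF Fgh t2])
  also have "cmpa Fg (x2, Idt PPB (FO FF x2), w) = (x2, Fg, w)"
    using Bp_idr[OF Fgh] by (simp add: cmpa_def)
  finally have PA2: "PA Lphi Fg S2 = rel (FO FF x1) `` {(x2, Fg, w)}" .
  have gen1: "((x2, Cmp PPB (Idt PPB (FO FF x1)) Fg, w), (x1, Idt PPB (FO FF x1), PA \<phi> g w)) \<in> gen (FO FF x1)"
    unfolding Fg_def by (rule gen_I[OF x12(1) x12(2) gh Bp_id[OF F_ob[OF x12(1)]] w2])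
  then have gen2: "((x2, Fg, w), (x1, Idt PPB (FO FF x1), PA \<phi> g w)) \<in> gen (FO FF x1)"
    using Bp_idl[OF Fgh] by simp
  have ta: "(x2, Fg, w) \<in> trip (FO FF x1)" unfolding trip_iff using x12(2) Fgh w2 by blast
  have tb: "(x1, Idt PPB (FO FF x1), PA \<phi> g w) \<in> trip (FO FF x1)" by (rule trip_id[OF x12(1) w1])
  have "((x2, Fg, w), (x1, Idt PPB (FO FF x1), PA \<phi> g w)) \<in> rel (FO FF x1)"
    by (rule rel_mk[OF r_into_rtrancl[OF UnI1[OF gen2]] ta tb])
  then have ceq: "rel (FO FF x1) `` {(x2, Fg, w)} = rel (FO FF x1) `` {(x1, Idt PPB (FO FF x1), PA \<phi> g w)}"
    by (rule equiv_class_eq[OF rel_equiv])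
  have FgA: "Fg \<in> Ar PPB" "Src PPB Fg = FO FF x1" "Tgt PPB Fg = FO FF x2" using homD[OF Fgh] by auto
  have S2in: "S2 \<in> PO Lphi (Tgt PPB Fg)" unfolding FgA(3) lan_PO S2_def by (rule cls_in[OF t2])
  have nat: "\<theta>' (FO FF x1) (PA Lphi Fg S2) = Cmp D (Cmp D (fst (snd Fg)) (\<theta>' (FO FF x2) S2)) (Idt D R)"
    using perp_nat[OF th FgA(1) S2in] FgA by simp
  have fsg: "fst (snd Fg) = fst (snd g)" unfolding Fg_def by (cases g) (simp add: FFA)
  have L: "Psi \<theta>' x1 (PA \<phi> g w) = \<theta>' (FO FF x1) (PA Lphi Fg S2)"
    using x12(1) w1 PA2 ceq by (simp add: Psi_def)
  have Rr: "Psi \<theta>' x2 w = \<theta>' (FO FF x2) S2" using x12(2) w2 by (simp add: Psi_def S2_def)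
  show "Psi \<theta>' (Src PPA g) (PA \<phi> g w) = Cmp D (Cmp D (fst (snd g)) (Psi \<theta>' (Tgt PPA g) w)) (Idt D (snd (Cmp T c d, R)))"
    unfolding x1_def[symmetric] x2_def[symmetric] L Rr nat fsg by simp
qed

lemma Psi_Phi:
  assumes th: "\<theta> \<in> PO (perp D T t A \<phi>) (d', R)"
  shows "Psi (Phi R \<theta>) = \<theta>"
proof (rule extensionalityI[where A="Ob PPA"])
  have thE: "\<theta> \<in> (\<Pi>\<^sub>E x\<in>Ob PPA. (PO \<phi> x \<rightarrow>\<^sub>E derivs D T t (fst x) (Cmp T (snd x) d') R))"
    using perp_ext[OF th] by simp
  show "Psi (Phi R \<theta>) \<in> extensional (Ob PPA)" unfolding Psi_def by (rule restrict_extensional)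
  show "\<theta> \<in> extensional (Ob PPA)" using thE by (simp add: PiE_iff)
  fix x assume x: "x \<in> Ob PPA"
  have thx: "\<theta> x \<in> (PO \<phi> x \<rightarrow>\<^sub>E derivs D T t (fst x) (Cmp T (snd x) d') R)" by (rule PiE_mem[OF thE x])
  show "Psi (Phi R \<theta>) x = \<theta> x"
  proof (rule extensionalityI[where A="PO \<phi> x"])
    show "Psi (Phi R \<theta>) x \<in> extensional (PO \<phi> x)" using x by (simp add: Psi_def)
    show "\<theta> x \<in> extensional (PO \<phi> x)" using thx by (simp add: PiE_iff)
    fix v assume v: "v \<in> PO \<phi> x"
    have tr: "(x, Idt PPB (FO FF x), v) \<in> trip (FO FF x)" by (rule trip_id[OF x v])
    have "Psi (Phi R \<theta>) x v = Phi R \<theta> (FO FF x) (rel (FO FF x) `` {(x, Idt PPB (FO FF x), v)})"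
      using x v by (simp add: Psi_def)
    also have "\<dots> = val R \<theta> (x, Idt PPB (FO FF x), v)"
      by (rule Phi_cls[OF th F_ob[OF x] cls_in[OF tr] cls_self[OF tr]])
    also have "\<dots> = \<theta> x v"
    proof -
      obtain P e where xe: "x = (P,e)" using prod.exhaust by blast
      have h: "\<theta> x v \<in> hom D P R" using perp_val[OF th x v] xe by (simp add: derivs_iff)
      show ?thesis using Didl[OF h] Didr[OF h] by (simp add: val_def xe Bplus_simps FFO)
    qed
    finally show "Psi (Phi R \<theta>) x v = \<theta> x v" .
  qed
qed

lemma Phi_Psi:
  assumes th: "\<theta>' \<in> PO (perp D T t B Lphi) (d, R)"
  shows "Phi R (Psi \<theta>') = \<theta>'"
proof (rule extensionalityI[where A="Ob PPB"])
  have thE: "\<theta>' \<in> (\<Pi>\<^sub>E X\<in>Ob PPB. (PO Lphi X \<rightarrow>\<^sub>E derivs D T t (fst X) (Cmp T (snd X) d) R))"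
    using perp_ext[OF th] by simp
  show "Phi R (Psi \<theta>') \<in> extensional (Ob PPB)" unfolding Phi_def by (rule restrict_extensional)
  show "\<theta>' \<in> extensional (Ob PPB)" using thE by (simp add: PiE_iff)
  fix X assume X: "X \<in> Ob PPB"
  have thX: "\<theta>' X \<in> (PO Lphi X \<rightarrow>\<^sub>E derivs D T t (fst X) (Cmp T (snd X) d) R)" by (rule PiE_mem[OF thE X])
  show "Phi R (Psi \<theta>') X = \<theta>' X"
  proof (rule extensionalityI[where A="PO Lphi X"])
    show "Phi R (Psi \<theta>') X \<in> extensional (PO Lphi X)" using X by (simp add: Phi_def)
    show "\<theta>' X \<in> extensional (PO Lphi X)" using thX by (simp add: PiE_iff)
    fix S assume S: "S \<in> PO Lphi X"
    have S': "S \<in> trip X // rel X" using S by (simp add: lan_PO)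
    define a where "a = (SOME s. s \<in> S)"
    have aS: "a \<in> S" unfolding a_def by (rule cls_some[OF S'])
    have Sa: "S = rel X `` {a}" and at: "a \<in> trip X" using cls_of[OF S' aS] by auto
    obtain x f v where a3: "a = (x,f,v)" by (rule prod_cases3)
    have a1: "x \<in> Ob PPA" "f \<in> hom PPB X (FO FF x)" "v \<in> PO \<phi> x" using at unfolding a3 trip_iff by auto
    define S1 where "S1 = rel (FO FF x) `` {(x, Idt PPB (FO FF x), v)}"
    have t1: "(x, Idt PPB (FO FF x), v) \<in> trip (FO FF x)" by (rule trip_id[OF a1(1) a1(3)])
    have "PA Lphi f S1 = rel X `` {cmpa f (x, Idt PPB (FO FF x), v)}"
      unfolding S1_def by (rule lan_PA_cls[OF a1(2) t1])
    also have "cmpa f (x, Idt PPB (FO FF x), v) = a" using Bp_idr[OF a1(2)] by (simp add: cmpa_def a3)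
    finally have PA1: "PA Lphi f S1 = S" using Sa by simp
    have fA: "f \<in> Ar PPB" "Src PPB f = X" "Tgt PPB f = FO FF x" using homD[OF a1(2)] by auto
    have S1in: "S1 \<in> PO Lphi (Tgt PPB f)" unfolding fA(3) lan_PO S1_def by (rule cls_in[OF t1])
    have nat: "\<theta>' X (PA Lphi f S1) = Cmp D (Cmp D (fst (snd f)) (\<theta>' (FO FF x) S1)) (Idt D R)"
      using perp_nat[OF th fA(1) S1in] fA by simp
    have "Phi R (Psi \<theta>') X S = val R (Psi \<theta>') a" using X S by (simp add: Phi_def a_def)
    also have "\<dots> = Cmp D (Cmp D (fst (snd f)) (\<theta>' (FO FF x) S1)) (Idt D R)"
      using a1 by (simp add: val_def a3 Psi_def S1_def)
    also have "\<dots> = \<theta>' X S" using nat PA1 by simp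
    finally show "Phi R (Psi \<theta>') X S = \<theta>' X S" .
  qed
qed

lemma cminus_FO: "FO (cminus T c) (d,R) = (Cmp T c d, R)" by (rule cminus_simps(1))
lemma cminus_FA: "fst (snd (FA (cminus T c) g)) = fst (snd g)" by (cases g) (simp add: cminus_def Let_def)

lemma Phi_nat:
  assumes g: "g \<in> hom (Bminus D T t B) y1 y2"
    and th: "\<theta> \<in> PO (pb (cminus T c) (perp D T t A \<phi>)) y2"
  shows "Phi (snd y1) (PA (pb (cminus T c) (perp D T t A \<phi>)) g \<theta>)
       = PA (perp D T t B Lphi) g (Phi (snd y2) \<theta>)"
proof -
  from g obtain \<gamma> where g1: "g = (y2, \<gamma>, y1)" "y1 \<in> Ob (Bminus D T t B)" "y2 \<in> Ob (Bminus D T t B)"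
    "\<gamma> \<in> hom D (snd y2) (snd y1)" "Cmp T (fst y2) (FA t \<gamma>) = fst y1"
    unfolding hom_Bminus by blast
  obtain d1 R1 where y1: "y1 = (d1,R1)" by (rule prod.exhaust)
  obtain d2 R2 where y2: "y2 = (d2,R2)" by (rule prod.exhaust)
  have th2: "\<theta> \<in> PO (perp D T t A \<phi>) (Cmp T c d2, R2)" using th by (simp add: pb_PO y2 cminus_FO)
  have gam: "\<gamma> \<in> hom D R2 R1" using g1(4) y1 y2 by simp
  define \<theta>2 where "\<theta>2 = PA (pb (cminus T c) (perp D T t A \<phi>)) g \<theta>"
  have th2e: "\<theta>2 = (\<lambda>x\<in>Ob PPA. \<lambda>v\<in>PO \<phi> x. Cmp D (Cmp D (Idt D (fst x)) (\<theta> x v)) \<gamma>)"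
    unfolding \<theta>2_def pb_PA perp_PA cminus_FA g1(1) by simp
  show ?thesis unfolding \<theta>2_def[symmetric] perp_PA
  proof (rule ext)
    fix X
    show "Phi (snd y1) \<theta>2 X = (\<lambda>X\<in>Ob PPB. \<lambda>S\<in>PO Lphi X. Cmp D (Cmp D (Idt D (fst X)) (Phi (snd y2) \<theta> X S)) (fst (snd g))) X"
    proof (cases "X \<in> Ob PPB")
      case False then show ?thesis by (simp add: Phi_def)
    next
      case X: True
      show ?thesis
      proof (rule ext)
        fix S
        show "Phi (snd y1) \<theta>2 X S = (\<lambda>X\<in>Ob PPB. \<lambda>S\<in>PO Lphi X. Cmp D (Cmp D (Idt D (fst X)) (Phi (snd y2) \<theta> X S)) (fst (snd g))) X S"
        proof (cases "S \<in> PO Lphi X")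
          case False then show ?thesis using X by (simp add: Phi_def)
        next
          case S: True
          have S': "S \<in> trip X // rel X" using S by (simp add: lan_PO)
          define a where "a = (SOME s. s \<in> S)"
          have aS: "a \<in> S" unfolding a_def by (rule cls_some[OF S'])
          have at: "a \<in> trip X" using cls_of[OF S' aS] by auto
          obtain x f v where a3: "a = (x,f,v)" by (rule prod_cases3)
          have a1: "x \<in> Ob PPA" "f \<in> hom PPB X (FO FF x)" "v \<in> PO \<phi> x" using at unfolding a3 trip_iff by auto
          obtain P e where xe: "x = (P,e)" using prod.exhaust by blast
          from a1(2) obtain \<beta> where fb: "f = (X, \<beta>, FO FF x)" "\<beta> \<in> hom D (fst X) (fst (FO FF x))"
            unfolding hom_Bplus by auto
          have bP: "\<beta> \<in> hom D (fst X) P" using fb(2) xe by (simp add: FFO)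
          have h: "\<theta> x v \<in> hom D P R2" using perp_val[OF th2 a1(1) a1(3)] xe by (simp add: derivs_iff)
          have t2: "\<theta>2 x v = Cmp D (\<theta> x v) \<gamma>" using a1 xe Didl[OF h] by (simp add: th2e)
          have "Phi (snd y1) \<theta>2 X S = Cmp D (Cmp D \<beta> (Cmp D (\<theta> x v) \<gamma>)) (Idt D R1)"
            using X S t2 by (simp add: Phi_def a_def[symmetric] val_def a3 fb(1) y1)
          also have "\<dots> = Cmp D \<beta> (Cmp D (\<theta> x v) \<gamma>)"
            by (rule Didr[OF Dcomp[OF bP Dcomp[OF h gam]]])
          also have "\<dots> = Cmp D (Cmp D \<beta> (\<theta> x v)) \<gamma>" by (rule Dassoc[OF bP h gam, symmetric])
          also have "\<dots> = Cmp D (Cmp D (Idt D (fst X)) (Cmp D (Cmp D \<beta> (\<theta> x v)) (Idt D R2))) \<gamma>"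
            using Didr[OF Dcomp[OF bP h]] Didl[OF Dcomp[OF bP h]] by simp
          also have "\<dots> = (\<lambda>X\<in>Ob PPB. \<lambda>S\<in>PO Lphi X. Cmp D (Cmp D (Idt D (fst X)) (Phi (snd y2) \<theta> X S)) (fst (snd g))) X S"
            using X S by (simp add: Phi_def a_def[symmetric] val_def a3 fb(1) y2 g1(1))
          finally show ?thesis .
        qed
      qed
    qed
  qed
qed

end

theorem lemma4p11:
  fixes D :: "('do, 'da) cat" and T :: "('to, 'ta) cat" and t :: "('do, 'da, 'to, 'ta) ftr"
    and A B :: 'to and c :: 'ta
    and \<phi> :: "('do \<times> 'ta, ('do \<times> 'ta) \<times> 'da \<times> ('do \<times> 'ta), 'v) psh"
  assumes "refinement_system D T t"
    and "A \<in> Ob T" and "B \<in> Ob T" and "c \<in> hom T A B"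
    and "presheaf (Bplus D T t A) \<phi>"
  shows "psh_iso (Bminus D T t B)
           (pb (cminus T c) (perp D T t A \<phi>))
           (perp D T t B (lan (Bplus D T t A) (Bplus D T t B) (cplus T c) \<phi>))"
proof -
  interpret L D T t A B c \<phi>
    using assms by (unfold_locales) auto
  show ?thesis unfolding psh_iso_def
  proof (rule exI[of _ "\<lambda>y. Phi (snd y)"], intro conjI ballI)
    fix y assume y: "y \<in> Ob (Bminus D T t B)"
    obtain d R where yd: "y = (d,R)" by (rule prod.exhaust)
    have dh: "d \<in> hom T B (FO t R)" using y unfolding yd Bminus_simps by auto
    have e: "PO (pb (cminus T c) (perp D T t A \<phi>)) (d,R) = PO (perp D T t A \<phi>) (Cmp T c d, R)"
      by (simp add: pb_PO cminus_FO)
    show "bij_betw (Phi (snd y)) (PO (pb (cminus T c) (perp D T t A \<phi>)) y) (PO (perp D T t B Lphi) y)"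
      unfolding yd snd_conv e
    proof (rule bij_betwI[where g=Psi])
      show "Phi R \<in> PO (perp D T t A \<phi>) (Cmp T c d, R) \<rightarrow> PO (perp D T t B Lphi) (d, R)"
        using Phi_in[OF _ dh] by blast
      show "Psi \<in> PO (perp D T t B Lphi) (d, R) \<rightarrow> PO (perp D T t A \<phi>) (Cmp T c d, R)"
        using Psi_in[OF _ dh] by blast
      show "Psi (Phi R x) = x" if "x \<in> PO (perp D T t A \<phi>) (Cmp T c d, R)" for x
        by (rule Psi_Phi[OF that])
      show "Phi R (Psi x) = x" if "x \<in> PO (perp D T t B Lphi) (d, R)" for x
        by (rule Phi_Psi[OF that])
    qed
  next
    fix x y f v
    assume "x \<in> Ob (Bminus D T t B)" "y \<in> Ob (Bminus D T t B)" and f: "f \<in> hom (Bminus D T t B) x y"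
      and v: "v \<in> PO (pb (cminus T c) (perp D T t A \<phi>)) y"
    show "Phi (snd x) (PA (pb (cminus T c) (perp D T t A \<phi>)) f v) = PA (perp D T t B Lphi) f (Phi (snd y) v)"
      by (rule Phi_nat[OF f v])
  qed
qed

end
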